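(* Let $k\in\mathbb Z$ and $c_k:=\frac14-9k^2$. Then $\partial_xv_k=c_kv_{k-1}$ in $(0,\infty)\times\mathbb R$, and for every $t\in\mathbb R$, $$c_k\Lambda_{k-1}(t)=\frac{(1+t^2)^{1/2}}{3}\Big(\big(\tfrac12+3k\big)\Lambda_k(t)-t(1+t^2)\Lambda_k'(t)\Big).$$
   Context: Let $M(a,b,\zeta)=\sum_{n\ge0}\frac{(a)_n}{(b)_n}\frac{\zeta^n}{n!}$ be Kummer's function. For $k\in\mathbb Z$ define $$\Lambda_k(t)=9^{\frac16+k}(1+t^2)^{-\frac14-\frac{3k}2}\Big[\tfrac{\Gamma(1/3)}{\Gamma(1/6-k)}M\big(-\tfrac16-k,\tfrac23,-\tfrac{t^3}{9}\big)-\tfrac{t}{9^{1/3}}\tfrac{\Gamma(-1/3)}{\Gamma(-1/6-k)}M\big(\tfrac16-k,\tfrac43,-\tfrac{t^3}{9}\big)\Big],$$ and for $x>0$, $z\in\mathbb R$, $v_k(x,z):=r^{\frac12+3k}\Lambda_k(t)$ with $r=(z^2+x^{2/3})^{1/2}$, $t=zx^{-1/3}$. *)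

theory Defs
  imports "HOL-Analysis.Analysis"
begin

definition kummerM :: "real \<Rightarrow> real \<Rightarrow> real \<Rightarrow> real" where
  "kummerM a b \<zeta> = (\<Sum>n. pochhammer a n / pochhammer b n * \<zeta> ^ n / fact n)"

definition Lam :: "int \<Rightarrow> real \<Rightarrow> real" where
  "Lam k t = 9 powr (1/6 + real_of_int k) * (1 + t^2) powr (-1/4 - 3 * real_of_int k / 2) *
     (Gamma (1/3) / Gamma (1/6 - real_of_int k) * kummerM (-1/6 - real_of_int k) (2/3) (- (t^3) / 9)
      - t / 9 powr (1/3) * (Gamma (-1/3) / Gamma (-1/6 - real_of_int k))
          * kummerM (1/6 - real_of_int k) (4/3) (- (t^3) / 9))"

definition vfun :: "int \<Rightarrow> real \<Rightarrow> real \<Rightarrow> real" where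
  "vfun k x z = (sqrt (z^2 + x powr (2/3))) powr (1/2 + 3 * real_of_int k) * Lam k (z * x powr (-1/3))"

definition ck :: "int \<Rightarrow> real" where
  "ck k = 1/4 - 9 * (real_of_int k)^2"

end

theory Submission
  imports Defs
begin


definition kc :: "real \<Rightarrow> real \<Rightarrow> nat \<Rightarrow> real" where
  "kc a b n = pochhammer a n / pochhammer b n / fact n"

lemma kummerM_eq: "kummerM a b z = (\<Sum>n. kc a b n * z^n)"
  unfolding kummerM_def kc_def by simp

lemma kummerM_fun: "kummerM a b = (\<lambda>z. \<Sum>n. kc a b n * z^n)"
  using kummerM_eq by blast

lemma poch_pos: "b > 0 \<Longrightarrow> pochhammer (b::real) n > 0"
  by (simp add: pochhammer_pos)

lemma kc_Suc: "b > 0 \<Longrightarrow> kc a b (Suc n) = kc a b n * (a + n) / ((b + n) * (n+1))"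
  using poch_pos[of b n]
  by (simp add: kc_def pochhammer_rec' field_simps)

lemma kc_summable:
  assumes b: "b > 0" shows "summable (\<lambda>n. kc a b n * z^n)"
proof (rule summable_ratio_test[where c="1/2" and N="nat \<lceil>2*(\<bar>a\<bar>+1)*(\<bar>z\<bar>+1)\<rceil>"])
  fix n assume n: "nat \<lceil>2*(\<bar>a\<bar>+1)*(\<bar>z\<bar>+1)\<rceil> \<le> n"
  hence n': "2*(\<bar>a\<bar>+1)*(\<bar>z\<bar>+1) \<le> real n" by linarith
  have e: "kc a b (Suc n) * z ^ Suc n = (kc a b n * z^n) * ((a+n) * z / ((b+n)*(n+1)))"
    using b by (simp add: kc_Suc)
  have "norm (kc a b (Suc n) * z ^ Suc n) = \<bar>kc a b n * z^n\<bar> * (\<bar>a+n\<bar> * \<bar>z\<bar> / ((b+n)*(n+1)))"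
    unfolding e real_norm_def abs_mult abs_divide using b by simp
  also have "\<dots> \<le> \<bar>kc a b n * z^n\<bar> * (1/2)"
  proof (rule mult_left_mono)
    have p: "(b+n)*(n+1) > 0" using b by simp
    define Q where "Q = (\<bar>a\<bar>+1)*(\<bar>z\<bar>+1)"
    have "2*Q \<le> real n" using n' unfolding Q_def by (simp only: mult.assoc)
    hence Q: "Q \<le> real n / 2" by linarith
    have "\<bar>a+n\<bar> * \<bar>z\<bar> \<le> (\<bar>a\<bar>+n) * (\<bar>z\<bar>+1)"
      by (intro mult_mono) auto
    also have "\<dots> \<le> (real n+1) * Q"
    proof -
      have h: "\<bar>a\<bar> + real n \<le> (real n+1)*(\<bar>a\<bar>+1)"
        using mult_nonneg_nonneg[of "real n" "\<bar>a\<bar>"] by (simp add: algebra_simps)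
      have "(\<bar>a\<bar> + real n) * (\<bar>z\<bar>+1) \<le> ((real n+1)*(\<bar>a\<bar>+1)) * (\<bar>z\<bar>+1)"
        by (rule mult_right_mono[OF h]) simp
      thus ?thesis unfolding Q_def by (simp only: mult.assoc)
    qed
    also have "\<dots> \<le> (real n+1) * (real n / 2)" by (rule mult_left_mono[OF Q]) simp
    also have "\<dots> \<le> (b+n)*(n+1)/2"
    proof -
      have "(real n+1) * real n \<le> (real n+1) * (b+n)" using b by (intro mult_left_mono) auto
      thus ?thesis by (simp add: field_simps)
    qed
    finally show "\<bar>a+n\<bar> * \<bar>z\<bar> / ((b+n)*(n+1)) \<le> 1/2" using p by (simp add: divide_simps)
  qed simp
  finally show "norm (kc a b (Suc n) * z ^ Suc n) \<le> 1/2 * norm (kc a b n * z^n)" by simp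
qed simp

definition dM :: "real \<Rightarrow> real \<Rightarrow> real \<Rightarrow> real" where
  "dM a b z = (\<Sum>n. diffs (kc a b) n * z^n)"

lemma kummerM_deriv: "b > 0 \<Longrightarrow> (kummerM a b has_real_derivative dM a b z) (at z)"
  unfolding kummerM_fun dM_def
  by (rule termdiffs_strong_converges_everywhere) (rule kc_summable)

lemma contig:
  assumes b: "b > 0"
  shows "z * dM a b z = a * kummerM (a+1) b z - a * kummerM a b z"
proof -
  define g where "g n = real n * kc a b n * z^n" for n
  have s1: "summable (\<lambda>n. diffs (kc a b) n * z^n)"
    by (rule termdiff_converges_all) (rule kc_summable[OF b])
  have gs: "(\<lambda>n. g (Suc n)) = (\<lambda>n. z * (diffs (kc a b) n * z^n))"
    by (auto simp: g_def diffs_def algebra_simps)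
  have sg1: "summable (\<lambda>n. g (Suc n))" unfolding gs by (intro summable_mult s1)
  hence sg: "summable g" by (simp add: summable_Suc_iff)
  have "z * dM a b z = (\<Sum>n. z * (diffs (kc a b) n * z^n))"
    unfolding dM_def by (rule suminf_mult[OF s1, symmetric])
  also have "\<dots> = (\<Sum>n. g (Suc n))" unfolding gs ..
  also have "\<dots> = suminf g" using suminf_split_head[OF sg] by (simp add: g_def)
  also have "\<dots> = (\<Sum>n. a * (kc (a+1) b n * z^n) - a * (kc a b n * z^n))"
  proof -
    have "a * kc (a+1) b n = kc a b n * (a + n)" for n
    proof -
      have "a * pochhammer (a+1) n = pochhammer a n * (a+n)"
        using pochhammer_rec[of a n] pochhammer_rec'[of a n] by (simp add: algebra_simps)
      thus ?thesis by (simp add: kc_def field_simps)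
    qed
    hence e: "a * (kc (a+1) b n * z^n) = kc a b n * (a + n) * z^n" for n
      by (simp only: mult.assoc[symmetric])
    have "g n = a * (kc (a+1) b n * z^n) - a * (kc a b n * z^n)" for n
      unfolding g_def e by (simp add: algebra_simps)
    hence "g = (\<lambda>n. a * (kc (a+1) b n * z^n) - a * (kc a b n * z^n))" by (rule ext)
    thus ?thesis by simp
  qed
  also have "\<dots> = a * kummerM (a+1) b z - a * kummerM a b z"
  proof -
    have "(\<Sum>n. a * (kc (a+1) b n * z^n) - a * (kc a b n * z^n)) =
       (\<Sum>n. a * (kc (a+1) b n * z^n)) - (\<Sum>n. a * (kc a b n * z^n))"
      by (rule suminf_diff[symmetric]) (intro summable_mult kc_summable b)+
    also have "\<dots> = a * kummerM (a+1) b z - a * kummerM a b z"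
      unfolding kummerM_eq
      by (simp only: suminf_mult[OF kc_summable[OF b]])
    finally show ?thesis .
  qed
  finally show ?thesis .
qed



lemma kummerM_deriv_chain [derivative_intros]:
  "b > 0 \<Longrightarrow> (f has_real_derivative f') (at x) \<Longrightarrow>
   ((\<lambda>x. kummerM a b (f x)) has_real_derivative dM a b (f x) * f') (at x)"
  by (rule DERIV_chain2[OF kummerM_deriv])

lemma notint: "(c::real) = 1/6 \<or> c = -1/6 \<Longrightarrow> c - real_of_int k \<notin> \<int>\<^sub>\<le>\<^sub>0"
proof
  assume c: "c = 1/6 \<or> c = -1/6" and "c - real_of_int k \<in> \<int>\<^sub>\<le>\<^sub>0"
  then obtain m where m: "c - real_of_int k = real_of_int m" by (auto simp: nonpos_Ints_def)
  from c show False
  proof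
    assume "c = 1/6"
    with m have "real_of_int (6*m) = real_of_int (1 - 6*k)" by simp
    hence "6*m = 1 - 6*k" by (simp only: of_int_eq_iff)
    thus False by presburger
  next
    assume "c = -1/6"
    with m have "real_of_int (6*m) = real_of_int (-1 - 6*k)" by simp
    hence "6*m = -1 - 6*k" by (simp only: of_int_eq_iff)
    thus False by presburger
  qed
qed

lemma G1: "Gamma (1/6 - real_of_int (k-1)) = (1/6 - real_of_int k) * Gamma (1/6 - real_of_int k)"
proof -
  have "1/6 - real_of_int (k-1) = (1/6 - real_of_int k) + 1" by simp
  thus ?thesis using Gamma_plus1[OF notint[of "1/6" k]] by simp
qed

lemma G2: "Gamma (-1/6 - real_of_int (k-1)) = (-1/6 - real_of_int k) * Gamma (-1/6 - real_of_int k)"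
proof -
  have "-1/6 - real_of_int (k-1) = (-1/6 - real_of_int k) + 1" by simp
  thus ?thesis using Gamma_plus1[OF notint[of "-1/6" k]] by simp
qed

lemma G1nz: "Gamma (1/6 - real_of_int k) \<noteq> 0"
  using Gamma_nonzero[OF notint[of "1/6" k]] by simp
lemma G2nz: "Gamma (-1/6 - real_of_int k) \<noteq> 0"
  using Gamma_nonzero[OF notint[of "-1/6" k]] by simp

lemma alg:
  fixes a a' X Y P Q M1 M2 :: real
  assumes "a \<noteq> 0" "a' \<noteq> 0" "a' = a + 1/3"
  shows "(-9*a*a') * (X/a'*P - Y/a*Q) =
    3*((-3*a)*(X*M1 - Y*M2) - (X*3*(a*P - a*M1) - Y*(M2 + 3*(a'*Q - a'*M2))))"
proof -
  have "(-9*a*a') * (X/a'*P - Y/a*Q) = -9*a*X*P + 9*a'*Y*Q"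
    using assms(1,2) by (simp add: field_simps)
  also have "\<dots> = 3*((-3*a)*(X*M1 - Y*M2) - (X*3*(a*P - a*M1) - Y*(M2 + 3*(a'*Q - a'*M2))))"
    unfolding assms(3) by (simp add: algebra_simps)
  finally show ?thesis .
qed

definition F :: "int \<Rightarrow> real \<Rightarrow> real" where
  "F k t = Gamma (1/3) / Gamma (1/6 - real_of_int k) * kummerM (-1/6 - real_of_int k) (2/3) (- (t^3) / 9)
      - t / 9 powr (1/3) * (Gamma (-1/3) / Gamma (-1/6 - real_of_int k))
          * kummerM (1/6 - real_of_int k) (4/3) (- (t^3) / 9)"

definition Fd :: "int \<Rightarrow> real \<Rightarrow> real" where
  "Fd k t = Gamma (1/3) / Gamma (1/6 - real_of_int k) * (dM (-1/6 - real_of_int k) (2/3) (- (t^3) / 9) * (-(t^2)/3))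
      - (1 / 9 powr (1/3) * (Gamma (-1/3) / Gamma (-1/6 - real_of_int k))
          * kummerM (1/6 - real_of_int k) (4/3) (- (t^3) / 9)
        + t / 9 powr (1/3) * (Gamma (-1/3) / Gamma (-1/6 - real_of_int k))
          * (dM (1/6 - real_of_int k) (4/3) (- (t^3) / 9) * (-(t^2)/3)))"

lemma Lam_F: "Lam k t = 9 powr (1/6 + real_of_int k) * (1 + t^2) powr (-1/4 - 3 * real_of_int k / 2) * F k t"
  unfolding Lam_def F_def by simp

lemma F_deriv: "(F k has_real_derivative Fd k t) (at t)"
proof -
  have "((\<lambda>t. F k t) has_real_derivative Fd k t) (at t)"
    unfolding F_def Fd_def
    apply (rule derivative_eq_intros refl | simp)+
    apply (simp add: field_simps)
    done
  thus ?thesis by simp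
qed

lemma F_rel: "ck k * F (k-1) t = 3 * ((1/2 + 3 * real_of_int k) * F k t - t * Fd k t)"
proof -
  define K :: real where "K = real_of_int k"
  define s :: real where "s = - (t^3) / 9"
  define a :: real where "a = -1/6 - K"
  define a' :: real where "a' = 1/6 - K"
  define q :: real where "q = 9 powr (1/3)"
  define GA :: real where "GA = Gamma (1/3)"
  define GB :: real where "GB = Gamma (-1/3)"
  define g1 :: real where "g1 = Gamma a'"
  define g2 :: real where "g2 = Gamma a"
  have g1: "g1 \<noteq> 0" unfolding g1_def a'_def K_def by (rule G1nz)
  have g2: "g2 \<noteq> 0" unfolding g2_def a_def K_def by (rule G2nz)
  have q: "q > 0" unfolding q_def by simp
  have c1: "s * dM a (2/3) s = a * kummerM (a+1) (2/3) s - a * kummerM a (2/3) s"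
    by (rule contig) simp
  have c2: "s * dM a' (4/3) s = a' * kummerM (a'+1) (4/3) s - a' * kummerM a' (4/3) s"
    by (rule contig) simp
  have Fk: "F k t = GA / g1 * kummerM a (2/3) s - t / q * (GB / g2) * kummerM a' (4/3) s"
    unfolding F_def GA_def GB_def g1_def g2_def a_def a'_def K_def s_def q_def by simp
  have Fk1: "F (k-1) t = GA / (a' * g1) * kummerM (a+1) (2/3) s - t / q * (GB / (a * g2)) * kummerM (a'+1) (4/3) s"
  proof -
    have e1: "-1/6 - real_of_int (k-1) = a + 1" and e2: "1/6 - real_of_int (k-1) = a' + 1"
      unfolding a_def a'_def K_def by simp_all
    show ?thesis
      using G1[of k] G2[of k]
      unfolding F_def GA_def GB_def g1_def g2_def a_def a'_def K_def s_def q_def by simp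
  qed
  have tFd: "t * Fd k t = GA / g1 * 3 * (s * dM a (2/3) s) - t / q * (GB / g2) * (kummerM a' (4/3) s + 3 * (s * dM a' (4/3) s))"
  proof -
    have Fd: "Fd k t = GA / g1 * (dM a (2/3) s * (-(t^2)/3)) - (1 / q * (GB / g2) * kummerM a' (4/3) s
        + t / q * (GB / g2) * (dM a' (4/3) s * (-(t^2)/3)))"
      unfolding Fd_def GA_def GB_def g1_def g2_def a_def a'_def K_def s_def q_def by simp
    have ts: "t * (-(t^2)/3) = 3 * s" unfolding s_def by (simp add: power2_eq_square power3_eq_cube)
    have "t * Fd k t = GA / g1 * (dM a (2/3) s * (t * (-(t^2)/3))) - t / q * (GB / g2) * (kummerM a' (4/3) s
        + (t * (-(t^2)/3)) * dM a' (4/3) s)"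
      unfolding Fd by (simp add: algebra_simps)
    thus ?thesis unfolding ts by (simp add: algebra_simps)
  qed
  have ck: "ck k = - 9 * a * a'" unfolding ck_def a_def a'_def K_def by (simp add: field_simps power2_eq_square)
  have k3: "1/2 + 3 * real_of_int k = - 3 * a" unfolding a_def K_def by simp
  have k3': "a' = a + 1/3" unfolding a_def a'_def by simp
  have a0: "a \<noteq> 0" using notint[of "-1/6" k] unfolding a_def K_def by auto
  have a1: "a + 1/3 \<noteq> 0"
  proof
    assume "a + 1/3 = 0"
    hence "1/6 - real_of_int k = 0" unfolding a_def K_def by simp
    thus False using notint[of "1/6" k] by (metis zero_in_nonpos_Ints)
  qed
  have a1': "a' \<noteq> 0" using a1 k3' by simp
  define X where "X = GA / g1"
  define Y where "Y = t / q * (GB / g2)"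
  have Fk1': "F (k-1) t = X / a' * kummerM (a+1) (2/3) s - Y / a * kummerM (a'+1) (4/3) s"
    unfolding Fk1 X_def Y_def by (simp add: mult_ac)
  have Fk': "F k t = X * kummerM a (2/3) s - Y * kummerM a' (4/3) s" unfolding Fk X_def Y_def by simp
  have tFd': "t * Fd k t = X * 3 * (s * dM a (2/3) s) - Y * (kummerM a' (4/3) s + 3 * (s * dM a' (4/3) s))"
    unfolding tFd X_def Y_def by simp
  show ?thesis
    unfolding Fk' Fk1' tFd' ck k3 c1 c2 by (rule alg[OF a0 a1' k3'])
qed



lemmas F_deriv_chain [derivative_intros] = F_deriv[THEN DERIV_chain2]

lemma alg2:
  fixes ee cc pp uu w0 tt f0 f1 gg :: real
  assumes "uu = 1 + tt^2" "gg = 3*(ee*f0 - tt*f1)"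
  shows "cc/9*(pp*uu*w0)*gg = w0/3*(ee*(cc*pp*f0) - tt*uu*(cc*((-ee/2)*(pp/uu)*(2*tt)*f0 + pp*f1)))"
proof -
  have uu: "uu > 0" using assms(1) by (simp add: add_pos_nonneg)
  define r where "r = pp / uu"
  have pr: "pp = uu * r" unfolding r_def using uu by simp
  show ?thesis unfolding r_def[symmetric] unfolding pr assms(2) unfolding assms(1)
    by (simp add: field_simps power2_eq_square)
qed

lemma part2:
  "Lam k differentiable (at t) \<and>
   ck k * Lam (k - 1) t = sqrt (1 + t^2) / 3 *
      ((1/2 + 3 * real_of_int k) * Lam k t - t * (1 + t^2) * deriv (Lam k) t)"
proof -
  define K where "K = real_of_int k"
  define u where "u = 1 + t^2"
  define C where "C = (9::real) powr (1/6 + K)"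
  define p where "p = -1/4 - 3 * K / 2"
  define P where "P = u powr p"
  have u: "u > 0" unfolding u_def by (simp add: add_pos_nonneg)
  have LF: "Lam k = (\<lambda>t. C * (1 + t^2) powr p * F k t)"
    unfolding C_def p_def K_def by (rule ext) (rule Lam_F)
  define DL where "DL = C * (p * (1 + t^2) powr (p - 1) * (2 * t) * F k t + (1 + t^2) powr p * Fd k t)"
  have D: "(Lam k has_real_derivative DL) (at t)"
    unfolding LF DL_def
    by (auto intro!: derivative_eq_intros simp: add_pos_nonneg algebra_simps)
  have dL: "deriv (Lam k) t = DL" by (rule DERIV_imp_deriv[OF D])
  have diff: "Lam k differentiable (at t)" using D real_differentiable_def by blast
  have e1: "(9::real) powr (1/6 + real_of_int (k-1)) = C / 9"
  proof -
    have "1/6 + real_of_int (k-1) = (1/6 + K) - 1" unfolding K_def by simp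
    hence "(9::real) powr (1/6 + real_of_int (k-1)) = 9 powr (1/6 + K) / 9 powr 1"
      by (simp only: powr_diff)
    thus ?thesis unfolding C_def by simp
  qed
  have e2: "u powr (-1/4 - 3 * real_of_int (k-1) / 2) = P * u * sqrt u"
  proof -
    have "-1/4 - 3 * real_of_int (k-1) / 2 = p + 1 + 1/2" unfolding p_def K_def by (simp add: field_simps)
    moreover have "u powr (p + 1 + 1/2) = P * u powr 1 * u powr (1/2)"
      unfolding P_def by (simp only: powr_add)
    ultimately show ?thesis using u by (simp add: powr_half_sqrt)
  qed
  have e3: "u powr (p - 1) = P / u" unfolding P_def using u by (simp add: powr_diff)
  have Lk1: "Lam (k-1) t = C / 9 * (P * u * sqrt u) * F (k-1) t"
    using Lam_F[of "k-1" t] unfolding e1 u_def[symmetric] e2 by simp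
  have Lk: "Lam k t = C * P * F k t" unfolding LF P_def u_def by simp
  have DL': "DL = C * ((-(1/2 + 3*K)/2) * (P / u) * (2 * t) * F k t + P * Fd k t)"
  proof -
    have "p = -(1/2 + 3*K)/2" unfolding p_def by simp
    thus ?thesis unfolding DL_def u_def[symmetric] e3 P_def by simp
  qed
  have "ck k * Lam (k - 1) t = C / 9 * (P * u * sqrt u) * (ck k * F (k-1) t)"
    unfolding Lk1 by (simp add: algebra_simps)
  also have "\<dots> = sqrt u / 3 * ((1/2 + 3*K) * (C * P * F k t) - t * u * (C * ((-(1/2 + 3*K)/2) * (P / u) * (2 * t) * F k t + P * Fd k t)))"
    by (rule alg2[OF u_def]) (simp add: F_rel K_def)
  finally show ?thesis using diff unfolding dL DL' Lk u_def K_def by simp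
qed



lemma vfun_eq:
  assumes y: "y > 0"
  shows "vfun k y z = (9*y) powr (1/6 + real_of_int k) * F k (z * y powr (-1/3))"
proof -
  define K where "K = real_of_int k"
  define t where "t = z * y powr (-1/3)"
  define e where "e = 1/2 + 3*K"
  define u where "u = 1 + t^2"
  have u: "u > 0" unfolding u_def by (simp add: add_pos_nonneg)
  have R: "z^2 + y powr (2/3) = y powr (2/3) * u"
  proof -
    have "y powr (2/3) * (y powr (-1/3) * y powr (-1/3)) = 1"
      using y by (simp flip: powr_add)
    thus ?thesis unfolding u_def t_def by (simp add: power2_eq_square algebra_simps)
  qed
  have "sqrt (z^2 + y powr (2/3)) powr e = (y powr (2/3) * u) powr (e/2)"
    unfolding R using y u by (simp add: powr_half_sqrt[symmetric] powr_powr)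
  also have "\<dots> = y powr (1/6 + K) * u powr (e/2)"
  proof -
    have ex: "2/3 * (e/2) = 1/6 + K" unfolding e_def by simp
    have "(y powr (2/3) * u) powr (e/2) = y powr (2/3 * (e/2)) * u powr (e/2)"
      using y u by (simp add: powr_mult powr_powr)
    thus ?thesis unfolding ex .
  qed
  finally have S: "sqrt (z^2 + y powr (2/3)) powr e = y powr (1/6 + K) * u powr (e/2)" .
  have U: "u powr (e/2) * u powr (-1/4 - 3*K/2) = 1"
  proof -
    have "e/2 + (-1/4 - 3*K/2) = 0" unfolding e_def by (simp add: field_simps)
    thus ?thesis using u by (simp flip: powr_add)
  qed
  have "vfun k y z = y powr (1/6 + K) * (u powr (e/2) * u powr (-1/4 - 3*K/2)) * (9 powr (1/6 + K) * F k t)"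
    unfolding vfun_def Lam_F S[unfolded e_def K_def] u_def t_def K_def e_def by (simp add: mult_ac)
  also have "\<dots> = (9*y) powr (1/6 + K) * F k t" unfolding U using y by (simp add: powr_mult)
  finally show ?thesis unfolding t_def K_def .
qed

lemma part1:
  assumes x: "x > 0"
  shows "((\<lambda>y. vfun k y z) has_real_derivative (ck k * vfun (k - 1) x z)) (at x)"
proof -
  define K where "K = real_of_int k"
  define q where "q = 1/6 + K"
  define t where "t = z * x powr (-1/3)"
  define W where "W = (9*x) powr (q - 1)"
  define D where "D = q * (9*x) powr (q - 1) * 9 * F k t + (9*x) powr q * (Fd k t * (z * ((-1/3) * x powr (-1/3 - 1))))"
  have g: "((\<lambda>y. (9*y) powr q * F k (z * y powr (-1/3))) has_real_derivative D) (at x)"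
    unfolding D_def t_def using x
    by (auto intro!: derivative_eq_intros simp: algebra_simps)
  have W9: "(9*x) powr q = W * (9*x)" unfolding W_def using x by (simp add: powr_diff)
  have x43: "x powr (-1/3 - 1) = x powr (-1/3) / x"
  proof -
    have "x powr (-1/3 - 1) = x powr (-1/3) / x powr 1" by (rule powr_diff)
    thus ?thesis using x by simp
  qed
  have D2: "D = q*W*9*F k t + W*(9*x)*(Fd k t * (z*((-1/3)*(x powr (-1/3)/x))))"
    unfolding D_def W_def[symmetric] W9 x43 ..
  have "D = W * (3 * ((1/2 + 3*K) * F k t - t * Fd k t))"
    unfolding D2 using x unfolding t_def q_def by (simp add: field_simps)
  also have "\<dots> = ck k * (W * F (k-1) t)" by (simp add: F_rel K_def)
  also have "\<dots> = ck k * vfun (k - 1) x z"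
  proof -
    have "1/6 + real_of_int (k-1) = q - 1" unfolding q_def K_def by simp
    thus ?thesis unfolding vfun_eq[OF x] W_def t_def by simp
  qed
  finally have g': "((\<lambda>y. (9*y) powr q * F k (z * y powr (-1/3))) has_real_derivative ck k * vfun (k - 1) x z) (at x)"
    using g by simp
  show ?thesis
    by (rule has_field_derivative_transform_within_open[OF g', of "{0<..}"])
       (use x in \<open>auto simp: vfun_eq q_def K_def\<close>)
qed


theorem lemma2p14:
  fixes k :: int
  shows "(\<forall>x z. x > 0 \<longrightarrow>
            ((\<lambda>y. vfun k y z) has_real_derivative (ck k * vfun (k - 1) x z)) (at x))
       \<and> (\<forall>t. Lam k differentiable (at t) \<and>
            ck k * Lam (k - 1) t = sqrt (1 + t^2) / 3 *
              ((1/2 + 3 * real_of_int k) * Lam k t - t * (1 + t^2) * deriv (Lam k) t))"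
  using part1 part2 by blast

end
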